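(* In the setting described in the context, $$\{y\in Y: |\phi_f^{-1}(\phi_f(y))\cap Y|>1\}=\varphi(Z).$$
   Context: Standing setting: $\Gamma$ countably infinite group, $n\in\mathbb N$, $\mathbb Z\Gamma$ its integral group ring (product $(fg)_t=\sum_sf_{ts^{-1}}g_s$, involution $(f^* )_s=f_{s^{-1}}$, for matrices $(f^* )^{(km)}=(f^{(mk)})^*$). $f=M-g\in M_n(\mathbb Z\Gamma)$ where $M=\mathrm{diag}(M_1,\dots,M_n)$ with positive integers $M_k$, $g=(g^{(km)})\in M_n(\mathbb Z\Gamma)$, $M_k>L_k:=\sum_{m\in[n]}\|g^{(km)}\|_1$ for all $k$, and there is a subsemigroup $P\subseteq\Gamma\setminus\{e_\Gamma\}$ containing $\mathrm{supp}(g^{(km)})$ for all $k,m$. Then $f$ is invertible in $M_n(\ell^1_{\mathbb R}(\Gamma))$. Put $\bar M=\max_kM_k$, $S_f=\prod_k\{0,\dots,M_k-1\}$, $Y=S_f^\Gamma$. Elements of $(\mathbb Z^n)^\Gamma$ are row vectors with entries $y_{s,k}$; products with matrices: $(yF)_m=\sum_ky_kF^{(km)}$ with convolution. $\|(f^* )^{-1}\|_{1,\infty}=\max_m\sum_k\|((f^* )^{-1})^{(km)}\|_1$. $\phi_f(y)=\pi(y(f^* )^{-1})$ where $\pi:(\mathbb R^\Gamma)^n\to((\mathbb R/\mathbb Z)^\Gamma)^n$ is the quotient map. Fix an integer $N\ge\bar M\|(f^* )^{-1}\|_{1,\infty}$, let $W=(\{-N,\dots,N\}^\Gamma)^n$,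 $V=W\setminus\{0\}$, $Z=\{(y,c)\in Y\times V: y+cf^*\in Y\}$, and $\varphi:Y\times V\to Y$ the projection. *)

theory Defs
  imports "HOL-Analysis.Analysis"
begin

(* The group Gamma is a type 'g of class group_add (NOT assumed commutative),
   written additively: identity 0, s^{-1} = -s, t s^{-1} = t - s.
   Matrices are functions nat => nat => ('g => _) indexed by k,m < n.
   Row vectors in (Z^n)^Gamma are functions 'g => nat => int, coordinate k < n,
   and 0 for k >= n. *)

definition supp :: "('g \<Rightarrow> 'a::zero) \<Rightarrow> 'g set" where
  "supp h = {s. h s \<noteq> 0}"

definition norm1_int :: "('g \<Rightarrow> int) \<Rightarrow> int" where
  "norm1_int h = (\<Sum>s\<in>supp h. \<bar>h s\<bar>)"

definition is_l1 :: "('g \<Rightarrow> real) \<Rightarrow> bool" where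
  "is_l1 h \<longleftrightarrow> (\<lambda>s. \<bar>h s\<bar>) summable_on UNIV"

definition norm1 :: "('g \<Rightarrow> real) \<Rightarrow> real" where
  "norm1 h = (\<Sum>\<^sub>\<infinity>s. \<bar>h s\<bar>)"

definition conv :: "('g::group_add \<Rightarrow> real) \<Rightarrow> ('g \<Rightarrow> real) \<Rightarrow> 'g \<Rightarrow> real" where
  "conv a b t = (\<Sum>\<^sub>\<infinity>s. a (t - s) * b s)"

definition conv_int :: "('g::group_add \<Rightarrow> int) \<Rightarrow> ('g \<Rightarrow> int) \<Rightarrow> 'g \<Rightarrow> int" where
  "conv_int a b t = (\<Sum>s\<in>supp b. a (t - s) * b s)"

definition star :: "('g::group_add \<Rightarrow> 'a) \<Rightarrow> 'g \<Rightarrow> 'a" where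
  "star h s = h (- s)"

definition mat_star :: "(nat \<Rightarrow> nat \<Rightarrow> 'g::group_add \<Rightarrow> 'a) \<Rightarrow> nat \<Rightarrow> nat \<Rightarrow> 'g \<Rightarrow> 'a" where
  "mat_star A k m = star (A m k)"

definition fmat :: "(nat \<Rightarrow> int) \<Rightarrow> (nat \<Rightarrow> nat \<Rightarrow> 'g::zero \<Rightarrow> int) \<Rightarrow> nat \<Rightarrow> nat \<Rightarrow> 'g \<Rightarrow> int" where
  "fmat M g k m s = (if k = m \<and> s = 0 then M k else 0) - g k m s"

definition mat_mult :: "nat \<Rightarrow> (nat \<Rightarrow> nat \<Rightarrow> 'g::group_add \<Rightarrow> real) \<Rightarrow> (nat \<Rightarrow> nat \<Rightarrow> 'g \<Rightarrow> real) \<Rightarrow> nat \<Rightarrow> nat \<Rightarrow> 'g \<Rightarrow> real" where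
  "mat_mult n A B k m = (\<lambda>t. \<Sum>j<n. conv (A k j) (B j m) t)"

definition mat_one :: "nat \<Rightarrow> nat \<Rightarrow> 'g::zero \<Rightarrow> real" where
  "mat_one k m s = (if k = m \<and> s = 0 then 1 else 0)"

definition is_l1_inverse :: "nat \<Rightarrow> (nat \<Rightarrow> nat \<Rightarrow> 'g::group_add \<Rightarrow> real) \<Rightarrow> (nat \<Rightarrow> nat \<Rightarrow> 'g \<Rightarrow> real) \<Rightarrow> bool" where
  "is_l1_inverse n A F \<longleftrightarrow>
     (\<forall>k<n. \<forall>m<n. is_l1 (F k m)) \<and>
     (\<forall>k<n. \<forall>m<n. mat_mult n F A k m = mat_one k m \<and> mat_mult n A F k m = mat_one k m)"

definition norm_1inf :: "nat \<Rightarrow> (nat \<Rightarrow> nat \<Rightarrow> 'g \<Rightarrow> real) \<Rightarrow> real" where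
  "norm_1inf n F = Max ((\<lambda>m. \<Sum>k<n. norm1 (F k m)) ` {..<n})"

definition Yset :: "nat \<Rightarrow> (nat \<Rightarrow> int) \<Rightarrow> ('g \<Rightarrow> nat \<Rightarrow> int) set" where
  "Yset n M = {y. \<forall>s k. (k < n \<longrightarrow> 0 \<le> y s k \<and> y s k < M k) \<and> (n \<le> k \<longrightarrow> y s k = 0)}"

(* phi_f(y) = pi(y (f^* )^{-1}); R/Z is represented by the fractional part in [0,1) *)
definition phi :: "nat \<Rightarrow> (nat \<Rightarrow> nat \<Rightarrow> 'g::group_add \<Rightarrow> real) \<Rightarrow> ('g \<Rightarrow> nat \<Rightarrow> int) \<Rightarrow> 'g \<Rightarrow> nat \<Rightarrow> real" where
  "phi n Finv y = (\<lambda>s m. if m < n then frac (\<Sum>k<n. conv (\<lambda>t. real_of_int (y t k)) (Finv k m) s) else 0)"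

definition vecmat_int :: "nat \<Rightarrow> ('g::group_add \<Rightarrow> nat \<Rightarrow> int) \<Rightarrow> (nat \<Rightarrow> nat \<Rightarrow> 'g \<Rightarrow> int) \<Rightarrow> 'g \<Rightarrow> nat \<Rightarrow> int" where
  "vecmat_int n c A = (\<lambda>s m. if m < n then (\<Sum>k<n. conv_int (\<lambda>t. c t k) (A k m) s) else 0)"

definition Wset :: "nat \<Rightarrow> int \<Rightarrow> ('g \<Rightarrow> nat \<Rightarrow> int) set" where
  "Wset n N = {c. \<forall>s k. (k < n \<longrightarrow> \<bar>c s k\<bar> \<le> N) \<and> (n \<le> k \<longrightarrow> c s k = 0)}"

definition Vset :: "nat \<Rightarrow> int \<Rightarrow> ('g \<Rightarrow> nat \<Rightarrow> int) set" where
  "Vset n N = Wset n N - {(\<lambda>s k. 0)}"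

definition Zset :: "nat \<Rightarrow> (nat \<Rightarrow> int) \<Rightarrow> (nat \<Rightarrow> nat \<Rightarrow> 'g::group_add \<Rightarrow> int) \<Rightarrow> int \<Rightarrow> (('g \<Rightarrow> nat \<Rightarrow> int) \<times> ('g \<Rightarrow> nat \<Rightarrow> int)) set" where
  "Zset n M g N = {(y, c). y \<in> Yset n M \<and> c \<in> Vset n N \<and>
      (\<lambda>s k. y s k + vecmat_int n c (mat_star (fmat M g)) s k) \<in> Yset n M}"

end

theory Submission
  imports Defs
begin


lemma summable_on_finsum:
  fixes f :: "'i \<Rightarrow> 'a \<Rightarrow> real"
  assumes "finite I" "\<And>i. i\<in>I \<Longrightarrow> f i summable_on A"
  shows "(\<lambda>x. \<Sum>i\<in>I. f i x) summable_on A"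
  using assms by (induction I rule: finite_induct) (auto intro: summable_on_add)

lemma infsum_finsum:
  fixes f :: "'i \<Rightarrow> 'a \<Rightarrow> real"
  assumes "finite I" "\<And>i. i\<in>I \<Longrightarrow> f i summable_on A"
  shows "infsum (\<lambda>x. \<Sum>i\<in>I. f i x) A = (\<Sum>i\<in>I. infsum (f i) A)"
  using assms
proof (induction I rule: finite_induct)
  case (insert i I)
  have "infsum (\<lambda>x. \<Sum>i\<in>insert i I. f i x) A = infsum (\<lambda>x. f i x + (\<Sum>i\<in>I. f i x)) A"
    using insert by simp
  also have "\<dots> = infsum (f i) A + infsum (\<lambda>x. \<Sum>i\<in>I. f i x) A"
    using insert by (intro infsum_add summable_on_finsum) auto
  finally show ?case using insert by simp
qed simp

lemma bl1_summable:
  fixes a b :: "'g \<Rightarrow> real"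
  assumes "\<And>t. \<bar>a t\<bar> \<le> B" "is_l1 b"
  shows "(\<lambda>t. a t * b t) summable_on UNIV"
proof -
  have "(\<lambda>t. B * \<bar>b t\<bar>) summable_on UNIV"
    using assms(2) unfolding is_l1_def
    by (simp add: summable_on_cmult_right)
  then have "(\<lambda>t. norm (a t * b t)) summable_on UNIV"
    apply (rule summable_on_comparison_test)
    using assms(1) by (auto simp: abs_mult intro!: mult_right_mono)
  then show ?thesis by (rule abs_summable_summable)
qed

lemma bl1_bound:
  fixes a b :: "'g \<Rightarrow> real"
  assumes "\<And>t. \<bar>a t\<bar> \<le> B" "is_l1 b"
  shows "\<bar>infsum (\<lambda>t. a t * b t) UNIV\<bar> \<le> B * norm1 b"
proof -
  have B0: "0 \<le> B" using assms(1)[of undefined] by linarith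
  have s1: "(\<lambda>t. \<bar>a t * b t\<bar>) summable_on UNIV"
  proof -
    have "(\<lambda>t. B * \<bar>b t\<bar>) summable_on UNIV"
      using assms(2) unfolding is_l1_def
      by (simp add: summable_on_cmult_right)
    then show ?thesis
      apply (rule summable_on_comparison_test)
      using assms(1) by (auto simp: abs_mult intro!: mult_right_mono)
  qed
  have "\<bar>infsum (\<lambda>t. a t * b t) UNIV\<bar> \<le> infsum (\<lambda>t. \<bar>a t * b t\<bar>) UNIV"
    using norm_infsum_bound[of "\<lambda>t. a t * b t" UNIV] s1 by simp
  also have "\<dots> \<le> infsum (\<lambda>t. B * \<bar>b t\<bar>) UNIV"
    apply (rule infsum_mono[OF s1])
    using assms(2) unfolding is_l1_def apply (simp add: summable_on_cmult_right)
    using assms(1) by (simp add: abs_mult mult_right_mono)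
  also have "\<dots> = B * norm1 b" unfolding norm1_def
    by (rule infsum_cmult_right) (use assms(2) in \<open>simp add: is_l1_def\<close>)
  finally show ?thesis .
qed

lemma l1_shift_r:
  fixes b :: "'g::group_add \<Rightarrow> real"
  assumes "is_l1 b" shows "is_l1 (\<lambda>v. b (v - u))"
proof -
  have bij: "bij_betw (\<lambda>v. v - u) UNIV UNIV"
    by (rule bij_betwI[where g="\<lambda>v. v + u"]) auto
  show ?thesis using assms unfolding is_l1_def
    using summable_on_reindex_bij_betw[OF bij, of "\<lambda>s. \<bar>b s\<bar>"] by simp
qed

lemma l1_shift_l:
  fixes b :: "'g::group_add \<Rightarrow> real"
  assumes "is_l1 b" shows "is_l1 (\<lambda>v. b (- u + v))"
proof -
  have bij: "bij_betw (\<lambda>v. - u + v) UNIV UNIV"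
    by (rule bij_betwI[where g="\<lambda>v. u + v"]) (auto simp: add.assoc[symmetric])
  show ?thesis using assms unfolding is_l1_def
    using summable_on_reindex_bij_betw[OF bij, of "\<lambda>s. \<bar>b s\<bar>"] by simp
qed

lemma conv_fin:
  fixes a b :: "'g::group_add \<Rightarrow> real"
  assumes "finite (supp b)"
  shows "conv a b t = (\<Sum>s\<in>supp b. a (t - s) * b s)"
proof -
  have "conv a b t = infsum (\<lambda>s. a (t - s) * b s) (supp b)"
    unfolding conv_def by (rule infsum_cong_neutral) (auto simp: supp_def)
  then show ?thesis using assms by simp
qed


lemma infsum_delta:
  fixes f :: "'a \<Rightarrow> real"
  shows "infsum (\<lambda>v. if v = a then f v else 0) UNIV = f a"
proof -
  have "infsum (\<lambda>v. if v = a then f v else 0) UNIV = infsum (\<lambda>v. if v = a then f v else 0) {a}"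
    by (rule infsum_cong_neutral) auto
  then show ?thesis by simp
qed

lemma shift_infsum:
  fixes h :: "'g::group_add \<Rightarrow> real"
  shows "infsum h UNIV = infsum (\<lambda>v. h (v - u)) UNIV"
proof -
  have bij: "bij_betw (\<lambda>v. v - u) UNIV UNIV"
    by (rule bij_betwI[where g="\<lambda>v. v + u"]) auto
  show ?thesis using infsum_reindex_bij_betw[OF bij, of h] by simp
qed

lemma shift_infsum_l:
  fixes h :: "'g::group_add \<Rightarrow> real"
  shows "infsum h UNIV = infsum (\<lambda>v. h (- u + v)) UNIV"
proof -
  have bij: "bij_betw (\<lambda>v. - u + v) UNIV UNIV"
    by (rule bij_betwI[where g="\<lambda>v. u + v"]) (auto simp: add.assoc[symmetric])
  show ?thesis using infsum_reindex_bij_betw[OF bij, of h] by simp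
qed

lemma assoc1:
  fixes d :: "'g::group_add \<Rightarrow> nat \<Rightarrow> real" and F A :: "nat \<Rightarrow> nat \<Rightarrow> 'g \<Rightarrow> real"
  assumes dB: "\<And>t k. k < n \<Longrightarrow> \<bar>d t k\<bar> \<le> B"
    and Fl1: "\<And>k m. k<n \<Longrightarrow> m<n \<Longrightarrow> is_l1 (F k m)"
    and Afin: "\<And>k m. k<n \<Longrightarrow> m<n \<Longrightarrow> finite (supp (A k m))"
    and inv: "\<And>k m. k<n \<Longrightarrow> m<n \<Longrightarrow> mat_mult n F A k m = mat_one k m"
    and k': "k' < n"
  shows "(\<Sum>m<n. \<Sum>u\<in>supp (A m k'). (\<Sum>k<n. conv (\<lambda>t. d t k) (F k m) (s - u)) * A m k' u) = d s k'"
proof -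
  define T where "T k m u v = (d (s - v) k * F k m (v - u)) * A m k' u" for k m u v
  have summ: "T k m u summable_on UNIV" if "k<n" "m<n" for k m u
    unfolding T_def
    apply (rule summable_on_cmult_left, rule bl1_summable[where B=B])
    using that dB apply simp
    by (rule l1_shift_r[OF Fl1[OF that]])
  have step1: "conv (\<lambda>t. d t k) (F k m) (s - u) * A m k' u = infsum (T k m u) UNIV"
    if "k<n" "m<n" for k m u
  proof -
    have "conv (\<lambda>t. d t k) (F k m) (s - u) = infsum (\<lambda>v. d (s - u - (v - u)) k * F k m (v - u)) UNIV"
      unfolding conv_def by (rule shift_infsum)
    also have "\<dots> = infsum (\<lambda>v. d (s - v) k * F k m (v - u)) UNIV"
      by (simp add: diff_conv_add_uminus add.assoc minus_add del: add_uminus_conv_diff)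
    moreover have "(\<lambda>v. d (s - v) k * F k m (v - u)) summable_on UNIV"
      apply (rule bl1_summable[where B=B])
      using that dB apply simp
      by (rule l1_shift_r[OF Fl1[OF that]])
    ultimately show ?thesis unfolding T_def
      using infsum_cmult_left[of "A m k' u" "\<lambda>v. d (s - v) k * F k m (v - u)" UNIV] by simp
  qed
  have "(\<Sum>m<n. \<Sum>u\<in>supp (A m k'). (\<Sum>k<n. conv (\<lambda>t. d t k) (F k m) (s - u)) * A m k' u)
      = (\<Sum>m<n. \<Sum>u\<in>supp (A m k'). \<Sum>k<n. infsum (T k m u) UNIV)"
    by (auto simp: sum_distrib_right step1 intro!: sum.cong)
  also have "\<dots> = (\<Sum>k<n. \<Sum>m<n. \<Sum>u\<in>supp (A m k'). infsum (T k m u) UNIV)"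
    by (subst sum.swap) (simp add: sum.swap[of _ "supp _"])
  also have "\<dots> = (\<Sum>k<n. infsum (\<lambda>v. \<Sum>m<n. \<Sum>u\<in>supp (A m k'). T k m u v) UNIV)"
  proof (rule sum.cong[OF refl])
    fix k assume "k \<in> {..<n}"
    then have k: "k < n" by simp
    have "(\<Sum>m<n. \<Sum>u\<in>supp (A m k'). infsum (T k m u) UNIV)
        = (\<Sum>m<n. infsum (\<lambda>v. \<Sum>u\<in>supp (A m k'). T k m u v) UNIV)"
      by (rule sum.cong[OF refl], rule infsum_finsum[symmetric]) (use Afin k' k summ in auto)
    also have "\<dots> = infsum (\<lambda>v. \<Sum>m<n. \<Sum>u\<in>supp (A m k'). T k m u v) UNIV"
      by (rule infsum_finsum[symmetric]) (use Afin k' k summ in \<open>auto intro!: summable_on_finsum\<close>)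
    finally show "(\<Sum>m<n. \<Sum>u\<in>supp (A m k'). infsum (T k m u) UNIV)
        = infsum (\<lambda>v. \<Sum>m<n. \<Sum>u\<in>supp (A m k'). T k m u v) UNIV" .
  qed
  also have "\<dots> = (\<Sum>k<n. infsum (\<lambda>v. if k = k' \<and> v = 0 then d (s - v) k else 0) UNIV)"
  proof (rule sum.cong[OF refl], rule infsum_cong)
    fix k v assume "k \<in> {..<n}"
    then have k: "k < n" by simp
    have "(\<Sum>m<n. \<Sum>u\<in>supp (A m k'). T k m u v) = d (s - v) k * (\<Sum>m<n. conv (F k m) (A m k') v)"
      unfolding T_def
      by (simp add: sum_distrib_left conv_fin Afin k' mult.assoc)
    also have "(\<Sum>m<n. conv (F k m) (A m k') v) = mat_one k k' v"
      using fun_cong[OF inv[OF k k'], of v] by (simp add: mat_mult_def)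
    finally show "(\<Sum>m<n. \<Sum>u\<in>supp (A m k'). T k m u v) = (if k = k' \<and> v = 0 then d (s - v) k else 0)"
      by (simp add: mat_one_def)
  qed
  also have "\<dots> = (\<Sum>k<n. if k = k' then d s k' else 0)"
    by (rule sum.cong[OF refl]) (auto simp: infsum_delta)
  also have "\<dots> = d s k'" using k' by simp
  finally show ?thesis .
qed


lemma conv_fin_l:
  fixes a b :: "'g::group_add \<Rightarrow> real"
  assumes "finite (supp a)"
  shows "conv a b v = (\<Sum>u\<in>supp a. a u * b (- u + v))"
proof -
  have bij: "bij_betw (\<lambda>u. - u + v) UNIV UNIV"
    by (rule bij_betwI[where g="\<lambda>w. v - w"]) (auto simp: diff_conv_add_uminus add.assoc minus_add simp del: add_uminus_conv_diff)
  have e: "v - (- u + v) = u" for u by (simp add: diff_conv_add_uminus minus_add add.assoc del: add_uminus_conv_diff)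
  have "conv a b v = infsum (\<lambda>u. a (v - (- u + v)) * b (- u + v)) UNIV"
    unfolding conv_def using infsum_reindex_bij_betw[OF bij, of "\<lambda>w. a (v - w) * b w"] by simp
  also have "\<dots> = infsum (\<lambda>u. a u * b (- u + v)) (supp a)"
    unfolding e by (rule infsum_cong_neutral) (auto simp: supp_def)
  finally show ?thesis using assms by simp
qed

lemma assoc2:
  fixes c :: "'g::group_add \<Rightarrow> nat \<Rightarrow> real" and F A :: "nat \<Rightarrow> nat \<Rightarrow> 'g \<Rightarrow> real"
  assumes cB: "\<And>t k. k < n \<Longrightarrow> \<bar>c t k\<bar> \<le> B"
    and Fl1: "\<And>k m. k<n \<Longrightarrow> m<n \<Longrightarrow> is_l1 (F k m)"
    and Afin: "\<And>k m. k<n \<Longrightarrow> m<n \<Longrightarrow> finite (supp (A k m))"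
    and inv: "\<And>k m. k<n \<Longrightarrow> m<n \<Longrightarrow> mat_mult n A F k m = mat_one k m"
    and k': "k' < n"
  shows "(\<Sum>m<n. conv (\<lambda>r. \<Sum>k<n. \<Sum>u\<in>supp (A k m). c (r - u) k * A k m u) (F m k') s) = c s k'"
proof -
  define T where "T k m u v = (c (s - v) k * F m k' (- u + v)) * A k m u" for k m u v
  have summ: "T k m u summable_on UNIV" if "k<n" "m<n" for k m u
    unfolding T_def
    apply (rule summable_on_cmult_left, rule bl1_summable[where B=B])
    using that cB apply simp
    by (rule l1_shift_l[OF Fl1[OF that(2) k']])
  have summ0: "(\<lambda>t. c (s - t - u) k * A k m u * F m k' t) summable_on UNIV" if "k<n" "m<n" for k m u
  proof -
    have "(\<lambda>t. c (s - t - u) k * F m k' t) summable_on UNIV"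
      by (rule bl1_summable[where B=B]) (use that cB Fl1 k' in auto)
    then show ?thesis
      using summable_on_cmult_left[of "\<lambda>t. c (s - t - u) k * F m k' t" UNIV "A k m u"]
      by (simp add: ac_simps)
  qed
  have step1: "conv (\<lambda>r. \<Sum>k<n. \<Sum>u\<in>supp (A k m). c (r - u) k * A k m u) (F m k') s
      = (\<Sum>k<n. \<Sum>u\<in>supp (A k m). infsum (T k m u) UNIV)" if m: "m<n" for m
  proof -
    have "conv (\<lambda>r. \<Sum>k<n. \<Sum>u\<in>supp (A k m). c (r - u) k * A k m u) (F m k') s
        = infsum (\<lambda>t. \<Sum>k<n. \<Sum>u\<in>supp (A k m). c (s - t - u) k * A k m u * F m k' t) UNIV"
      unfolding conv_def by (simp add: sum_distrib_right)
    also have "\<dots> = (\<Sum>k<n. \<Sum>u\<in>supp (A k m). infsum (\<lambda>t. c (s - t - u) k * A k m u * F m k' t) UNIV)"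
      apply (subst infsum_finsum)
        apply simp
       apply (rule summable_on_finsum) using Afin m summ0 apply auto[2]
      apply (rule sum.cong[OF refl])
      apply (rule infsum_finsum) using Afin m summ0 by auto
    also have "\<dots> = (\<Sum>k<n. \<Sum>u\<in>supp (A k m). infsum (T k m u) UNIV)"
    proof (intro sum.cong refl)
      fix k u
      have "infsum (\<lambda>t. c (s - t - u) k * A k m u * F m k' t) UNIV
          = infsum (\<lambda>v. c (s - (- u + v) - u) k * A k m u * F m k' (- u + v)) UNIV"
        by (rule shift_infsum_l)
      also have "\<dots> = infsum (T k m u) UNIV"
      proof (rule infsum_cong)
        fix v
        have e: "s - (- u + v) - u = s - v" by (simp add: diff_conv_add_uminus minus_add add.assoc del: add_uminus_conv_diff)
        show "c (s - (- u + v) - u) k * A k m u * F m k' (- u + v) = T k m u v"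
          unfolding T_def e by (simp only: mult_ac)
      qed
      finally show "infsum (\<lambda>t. c (s - t - u) k * A k m u * F m k' t) UNIV = infsum (T k m u) UNIV" .
    qed
    finally show ?thesis .
  qed
  have "(\<Sum>m<n. conv (\<lambda>r. \<Sum>k<n. \<Sum>u\<in>supp (A k m). c (r - u) k * A k m u) (F m k') s)
      = (\<Sum>m<n. \<Sum>k<n. \<Sum>u\<in>supp (A k m). infsum (T k m u) UNIV)"
    by (rule sum.cong[OF refl]) (simp add: step1)
  also have "\<dots> = (\<Sum>k<n. \<Sum>m<n. \<Sum>u\<in>supp (A k m). infsum (T k m u) UNIV)"
    by (rule sum.swap)
  also have "\<dots> = (\<Sum>k<n. infsum (\<lambda>v. \<Sum>m<n. \<Sum>u\<in>supp (A k m). T k m u v) UNIV)"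
  proof (rule sum.cong[OF refl])
    fix k assume "k \<in> {..<n}"
    then have k: "k < n" by simp
    have "(\<Sum>m<n. \<Sum>u\<in>supp (A k m). infsum (T k m u) UNIV)
        = (\<Sum>m<n. infsum (\<lambda>v. \<Sum>u\<in>supp (A k m). T k m u v) UNIV)"
      by (rule sum.cong[OF refl], rule infsum_finsum[symmetric]) (use Afin k summ in auto)
    also have "\<dots> = infsum (\<lambda>v. \<Sum>m<n. \<Sum>u\<in>supp (A k m). T k m u v) UNIV"
      by (rule infsum_finsum[symmetric]) (use Afin k summ in \<open>auto intro!: summable_on_finsum\<close>)
    finally show "(\<Sum>m<n. \<Sum>u\<in>supp (A k m). infsum (T k m u) UNIV)
        = infsum (\<lambda>v. \<Sum>m<n. \<Sum>u\<in>supp (A k m). T k m u v) UNIV" .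
  qed
  also have "\<dots> = (\<Sum>k<n. infsum (\<lambda>v. if k = k' \<and> v = 0 then c (s - v) k else 0) UNIV)"
  proof (rule sum.cong[OF refl], rule infsum_cong)
    fix k v assume "k \<in> {..<n}"
    then have k: "k < n" by simp
    have "(\<Sum>m<n. \<Sum>u\<in>supp (A k m). T k m u v) = c (s - v) k * (\<Sum>m<n. conv (A k m) (F m k') v)"
      unfolding T_def
      by (simp add: sum_distrib_left conv_fin_l Afin k ac_simps)
    also have "(\<Sum>m<n. conv (A k m) (F m k') v) = mat_one k k' v"
      using fun_cong[OF inv[OF k k'], of v] by (simp add: mat_mult_def)
    finally show "(\<Sum>m<n. \<Sum>u\<in>supp (A k m). T k m u v) = (if k = k' \<and> v = 0 then c (s - v) k else 0)"
      by (simp add: mat_one_def)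
  qed
  also have "\<dots> = (\<Sum>k<n. if k = k' then c s k' else 0)"
    by (rule sum.cong[OF refl]) (auto simp: infsum_delta)
  also have "\<dots> = c s k'" using k' by simp
  finally show ?thesis .
qed


lemma conv_add:
  fixes a b F :: "'g::group_add \<Rightarrow> real"
  assumes "\<And>t. \<bar>a t\<bar> \<le> Ba" "\<And>t. \<bar>b t\<bar> \<le> Bb" "is_l1 F"
  shows "conv (\<lambda>t. a t + b t) F s = conv a F s + conv b F s"
  unfolding conv_def distrib_right
  by (rule infsum_add; rule bl1_summable) (use assms in auto)

lemma conv_bound:
  fixes a F :: "'g::group_add \<Rightarrow> real"
  assumes "\<And>t. \<bar>a t\<bar> \<le> B" "is_l1 F"
  shows "\<bar>conv a F s\<bar> \<le> B * norm1 F"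
  unfolding conv_def by (rule bl1_bound) (use assms in auto)

lemma norm1_nonneg: "0 \<le> norm1 F"
  unfolding norm1_def by (rule infsum_nonneg) simp



theorem lemma4p2:
  fixes n :: nat and M :: "nat \<Rightarrow> int"
    and g :: "nat \<Rightarrow> nat \<Rightarrow> 'g::{group_add,countable} \<Rightarrow> int"
    and P :: "'g set" and Finv :: "nat \<Rightarrow> nat \<Rightarrow> 'g \<Rightarrow> real" and N :: int
  assumes "infinite (UNIV :: 'g set)"
    and gfin: "\<forall>k<n. \<forall>m<n. finite (supp (g k m))"
    and Mpos: "\<forall>k<n. 0 < M k"
    and "\<forall>k<n. (\<Sum>m<n. norm1_int (g k m)) < M k"
    and "0 \<notin> P" and "\<forall>a\<in>P. \<forall>b\<in>P. a + b \<in> P"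
    and "\<forall>k<n. \<forall>m<n. supp (g k m) \<subseteq> P"
    and inv: "is_l1_inverse n (mat_star (\<lambda>k m s. real_of_int (fmat M g k m s))) Finv"
    and Nbd: "real_of_int (Max (M ` {..<n})) * norm_1inf n Finv \<le> real_of_int N"
  shows "{y \<in> Yset n M.
            infinite {y' \<in> Yset n M. phi n Finv y' = phi n Finv y}
            \<or> 1 < card {y' \<in> Yset n M. phi n Finv y' = phi n Finv y}}
         = fst ` Zset n M g N"
proof -
  define A where "A = mat_star (\<lambda>k m s. real_of_int (fmat M g k m s))"
  define Ai where "Ai = mat_star (fmat M g)"
  define Mb where "Mb = Max (M ` {..<n})"
  have inv1: "mat_mult n Finv A k m = mat_one k m" if "k<n" "m<n" for k m
    using inv that unfolding A_def is_l1_inverse_def by blast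
  have inv2: "mat_mult n A Finv k m = mat_one k m" if "k<n" "m<n" for k m
    using inv that unfolding A_def is_l1_inverse_def by blast
  have Fl1: "is_l1 (Finv k m)" if "k<n" "m<n" for k m
    using inv that unfolding is_l1_inverse_def by blast
  have Areal: "A k m s = real_of_int (Ai k m s)" for k m s
    unfolding A_def Ai_def mat_star_def star_def by simp
  have suppA: "supp (A k m) = supp (Ai k m)" for k m
    unfolding supp_def Areal by simp
  have Afin: "finite (supp (A k m))" if "k<n" "m<n" for k m
  proof -
    have "supp (Ai k m) \<subseteq> {0} \<union> uminus ` supp (g m k)"
    proof
      fix s assume "s \<in> supp (Ai k m)"
      then have "fmat M g m k (- s) \<noteq> 0" unfolding supp_def Ai_def mat_star_def star_def by simp
      then have "s = 0 \<or> g m k (- s) \<noteq> 0" unfolding fmat_def by (auto split: if_splits)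
      then show "s \<in> {0} \<union> uminus ` supp (g m k)"
        unfolding supp_def by (auto intro: image_eqI[where x="- s"])
    qed
    moreover have "finite (supp (g m k))" using gfin that by blast
    ultimately show ?thesis unfolding suppA by (meson finite_Un finite_imageI finite_insert finite.emptyI finite_subset)
  qed
  have vm: "real_of_int (vecmat_int n c Ai s m)
      = (\<Sum>k<n. \<Sum>u\<in>supp (A k m). real_of_int (c (s - u) k) * A k m u)" if "m<n" for c s m
    using that unfolding vecmat_int_def conv_int_def suppA Areal by simp
  have Ybd: "0 \<le> y s k \<and> y s k < M k" if "y \<in> Yset n M" "k<n" for y s k
    using that unfolding Yset_def by blast
  have Y0: "y s k = 0" if "y \<in> Yset n M" "\<not> k<n" for y s k
    using that unfolding Yset_def by auto
  have MbGe: "M k \<le> Mb" if "k<n" for k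
    unfolding Mb_def using that by (intro Max_ge) auto
  have normGe: "(\<Sum>k<n. norm1 (Finv k m)) \<le> norm_1inf n Finv" if "m<n" for m
    unfolding norm_1inf_def using that by (intro Max_ge) auto
  have Mb0: "0 \<le> real_of_int Mb" if "k<n" for k
    using MbGe[OF that] Mpos that by force
  have yR: "\<bar>real_of_int (y t k)\<bar> \<le> real_of_int Mb" if "y \<in> Yset n M" "k<n" for y t k
    using Ybd[OF that, of t] MbGe[OF that(2)] by linarith
  have dR: "\<bar>real_of_int (y' t k) - real_of_int (y t k)\<bar> \<le> real_of_int Mb"
    if "y \<in> Yset n M" "y' \<in> Yset n M" "k<n" for y y' t k
    using Ybd[OF that(1,3), of t] Ybd[OF that(2,3), of t] MbGe[OF that(3)] by linarith
  show ?thesis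
  proof (rule set_eqI, rule iffI)
    fix y assume yin: "y \<in> {y \<in> Yset n M.
            infinite {y' \<in> Yset n M. phi n Finv y' = phi n Finv y}
            \<or> 1 < card {y' \<in> Yset n M. phi n Finv y' = phi n Finv y}}"
    define S where "S = {y' \<in> Yset n M. phi n Finv y' = phi n Finv y}"
    have yY: "y \<in> Yset n M" and big: "infinite S \<or> 1 < card S" using yin unfolding S_def by auto
    have "y \<in> S" using yY unfolding S_def by simp
    moreover have "S \<noteq> {y}" using big by auto
    ultimately obtain y' where y'S: "y' \<in> S" and y'ne: "y' \<noteq> y" by blast
    have y'Y: "y' \<in> Yset n M" and y'phi: "phi n Finv y' = phi n Finv y" using y'S unfolding S_def by auto
    define d where "d t k = real_of_int (y' t k) - real_of_int (y t k)" for t k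
    have dB: "\<bar>d t k\<bar> \<le> real_of_int Mb" if "k<n" for t k
      unfolding d_def using dR[OF yY y'Y that] .
    define X where "X z s m = (\<Sum>k<n. conv (\<lambda>t. real_of_int (z t k)) (Finv k m) s)" for z :: "'g \<Rightarrow> nat \<Rightarrow> int" and s m
    define e where "e m s = (\<Sum>k<n. conv (\<lambda>t. d t k) (Finv k m) s)" for m s
    have Xadd: "X y' s m = X y s m + e m s" if m: "m<n" for s m
    proof -
      have "conv (\<lambda>t. real_of_int (y' t k)) (Finv k m) s
          = conv (\<lambda>t. real_of_int (y t k)) (Finv k m) s + conv (\<lambda>t. d t k) (Finv k m) s" if k: "k<n" for k
      proof -
        have "conv (\<lambda>t. real_of_int (y' t k)) (Finv k m) s = conv (\<lambda>t. real_of_int (y t k) + d t k) (Finv k m) s"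
          unfolding d_def by simp
        also have "\<dots> = conv (\<lambda>t. real_of_int (y t k)) (Finv k m) s + conv (\<lambda>t. d t k) (Finv k m) s"
          by (rule conv_add[where Ba="real_of_int Mb" and Bb="real_of_int Mb"])
            (use yR[OF yY k] dB[OF k] Fl1[OF k m] in auto)
        finally show ?thesis .
      qed
      then show ?thesis unfolding X_def e_def by (simp add: sum.distrib)
    qed
    have fr: "frac (X y' s m) = frac (X y s m)" if "m<n" for s m
      using fun_cong[OF fun_cong[OF y'phi, of s], of m] that unfolding phi_def X_def by simp
    define c where "c s m = (if m < n then \<lfloor>X y' s m\<rfloor> - \<lfloor>X y s m\<rfloor> else 0)" for s m
    have ce: "real_of_int (c s m) = e m s" if "m<n" for s m
      using fr[OF that, of s] Xadd[OF that, of s] that unfolding c_def frac_def by simp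
    have cN: "\<bar>c s m\<bar> \<le> N" if m: "m<n" for s m
    proof -
      have "\<bar>e m s\<bar> \<le> (\<Sum>k<n. \<bar>conv (\<lambda>t. d t k) (Finv k m) s\<bar>)"
        unfolding e_def by (rule sum_abs)
      also have "\<dots> \<le> (\<Sum>k<n. real_of_int Mb * norm1 (Finv k m))"
        by (rule sum_mono, rule conv_bound) (use dB Fl1 m in auto)
      also have "\<dots> = real_of_int Mb * (\<Sum>k<n. norm1 (Finv k m))"
        by (simp add: sum_distrib_left)
      also have "\<dots> \<le> real_of_int Mb * norm_1inf n Finv"
        by (rule mult_left_mono[OF normGe[OF m] Mb0[OF m]])
      also have "\<dots> \<le> real_of_int N" using Nbd unfolding Mb_def .
      finally have "\<bar>real_of_int (c s m)\<bar> \<le> real_of_int N" using ce[OF m] by simp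
      then show ?thesis by linarith
    qed
    have vc: "real_of_int (vecmat_int n c Ai s k') = d s k'" if k': "k'<n" for s k'
    proof -
      have "real_of_int (vecmat_int n c Ai s k')
          = (\<Sum>m<n. \<Sum>u\<in>supp (A m k'). (\<Sum>k<n. conv (\<lambda>t. d t k) (Finv k m) (s - u)) * A m k' u)"
        unfolding vm[OF k'] by (intro sum.cong refl) (simp add: ce e_def)
      also have "\<dots> = d s k'"
        by (rule assoc1[where B="real_of_int Mb"]) (use dB Fl1 Afin inv1 k' in auto)
      finally show ?thesis .
    qed
    have y'eq: "(\<lambda>s k. y s k + vecmat_int n c Ai s k) = y'"
    proof (intro ext)
      fix s k
      show "y s k + vecmat_int n c Ai s k = y' s k"
      proof (cases "k<n")
        case True
        then have "real_of_int (y s k + vecmat_int n c Ai s k) = real_of_int (y' s k)"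
          using vc[OF True, of s] unfolding d_def by simp
        then show ?thesis by linarith
      next
        case False
        then show ?thesis using Y0[OF yY False] Y0[OF y'Y False] unfolding vecmat_int_def by simp
      qed
    qed
    have cW: "c \<in> Wset n N" unfolding Wset_def using cN by (auto simp: c_def)
    have cnz: "c \<noteq> (\<lambda>s k. 0)"
    proof
      assume c00: "c = (\<lambda>s k. 0)"
      have "vecmat_int n c Ai = (\<lambda>s k. 0)" unfolding vecmat_int_def conv_int_def
        by (intro ext) (simp add: c00)
      then show False using y'eq y'ne by simp
    qed
    have "(y, c) \<in> Zset n M g N"
      unfolding Zset_def Vset_def using yY cW cnz y'eq y'Y unfolding Ai_def by auto
    then show "y \<in> fst ` Zset n M g N" by force
  next
    fix y assume "y \<in> fst ` Zset n M g N"
    then obtain c where yY: "y \<in> Yset n M" and cV: "c \<in> Vset n N"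
      and y'Y0: "(\<lambda>s k. y s k + vecmat_int n c Ai s k) \<in> Yset n M"
      unfolding Zset_def Ai_def by auto
    define y' where "y' = (\<lambda>s k. y s k + vecmat_int n c Ai s k)"
    have y'Y: "y' \<in> Yset n M" using y'Y0 unfolding y'_def .
    have cB: "\<bar>real_of_int (c t k)\<bar> \<le> real_of_int N" if "k<n" for t k
    proof -
      have "\<bar>c t k\<bar> \<le> N" using cV that unfolding Vset_def Wset_def by auto
      then show ?thesis by linarith
    qed
    have c0: "c t k = 0" if "\<not> k<n" for t k
      using cV that unfolding Vset_def Wset_def by auto
    define e where "e m r = real_of_int (vecmat_int n c Ai r m)" for m r
    have ee: "e m r = real_of_int (y' r m) - real_of_int (y r m)" for m r
      unfolding e_def y'_def by simp
    have ass: "(\<Sum>m<n. conv (e m) (Finv m k') s) = real_of_int (c s k')" if k': "k'<n" for k' s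
    proof -
      have "(\<Sum>m<n. conv (e m) (Finv m k') s)
          = (\<Sum>m<n. conv (\<lambda>r. \<Sum>k<n. \<Sum>u\<in>supp (A k m). real_of_int (c (r - u) k) * A k m u) (Finv m k') s)"
        by (intro sum.cong refl arg_cong[where f="\<lambda>h. conv h _ _"] ext) (simp add: e_def vm)
      also have "\<dots> = real_of_int (c s k')"
        by (rule assoc2[where B="real_of_int N"]) (use cB Fl1 Afin inv2 k' in auto)
      finally show ?thesis .
    qed
    have y'ne: "y' \<noteq> y"
    proof
      assume eq: "y' = y"
      have "c = (\<lambda>s k. 0)"
      proof (intro ext)
        fix s k'
        show "c s k' = 0"
        proof (cases "k'<n")
          case True
          have "e m = (\<lambda>r. 0)" for m unfolding ee eq by simp
          then have "real_of_int (c s k') = 0" using ass[OF True, of s] by (simp add: conv_def)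
          then show ?thesis by simp
        qed (rule c0)
      qed
      then show False using cV unfolding Vset_def by simp
    qed
    have phieq: "phi n Finv y' = phi n Finv y"
    proof (intro ext)
      fix s m
      show "phi n Finv y' s m = phi n Finv y s m"
      proof (cases "m<n")
        case m: True
        have "(\<Sum>k<n. conv (\<lambda>t. real_of_int (y' t k)) (Finv k m) s)
            = (\<Sum>k<n. conv (\<lambda>t. real_of_int (y t k)) (Finv k m) s) + (\<Sum>k<n. conv (e k) (Finv k m) s)"
          unfolding sum.distrib[symmetric]
        proof (intro sum.cong refl)
          fix k assume "k \<in> {..<n}"
          then have k: "k<n" by simp
          have "conv (\<lambda>t. real_of_int (y' t k)) (Finv k m) s = conv (\<lambda>t. real_of_int (y t k) + e k t) (Finv k m) s"
            unfolding ee by simp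
          also have "\<dots> = conv (\<lambda>t. real_of_int (y t k)) (Finv k m) s + conv (e k) (Finv k m) s"
            by (rule conv_add[where Ba="real_of_int Mb" and Bb="real_of_int Mb"])
              (use yR[OF yY k] dR[OF yY y'Y k] Fl1[OF k m] in \<open>auto simp: ee\<close>)
          finally show "conv (\<lambda>t. real_of_int (y' t k)) (Finv k m) s
              = conv (\<lambda>t. real_of_int (y t k)) (Finv k m) s + conv (e k) (Finv k m) s" .
        qed
        also have "\<dots> = (\<Sum>k<n. conv (\<lambda>t. real_of_int (y t k)) (Finv k m) s) + real_of_int (c s m)"
          using ass[OF m] by simp
        finally show ?thesis unfolding phi_def using m by (simp add: frac_def)
      qed (simp add: phi_def)
    qed
    define S where "S = {y' \<in> Yset n M. phi n Finv y' = phi n Finv y}"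
    have sub: "{y, y'} \<subseteq> S" unfolding S_def using yY y'Y phieq by auto
    have "infinite S \<or> 1 < card S"
    proof (cases "finite S")
      case True
      then have "card {y, y'} \<le> card S" using sub by (rule card_mono)
      then show ?thesis using y'ne by auto
    qed simp
    then show "y \<in> {y \<in> Yset n M.
            infinite {y' \<in> Yset n M. phi n Finv y' = phi n Finv y}
            \<or> 1 < card {y' \<in> Yset n M. phi n Finv y' = phi n Finv y}}"
      using yY unfolding S_def by simp
  qed
qed


end
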